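(* Let $(X,\mu)$ be a standard Borel space with a non-atomic Borel probability measure, and let $R_{12},R_{13},R_{23}$ be SP1 equivalence relations on $X$. For $\{i,j,k\}=\{1,2,3\}$ let $R_i=R_{ij}\vee R_{ik}$ (with $R_{ji}=R_{ij}$), and assume $R_i\cap R_j=R_{ij}$ for $i\ne j$; put $R_0=R_{12}\cap R_{13}\cap R_{23}$. Suppose $R=R_1\vee R_2\vee R_3=R_{12}\vee R_{23}\vee R_{13}$ is a minimal triangle join (i.e. with $E_i:=R_i$, $E_1\vee E_2\vee E_3$ is a triangle join over $R_{12},R_{23},R_{13}$). Then $R=R_1\vee R_2$, and \[R=R_1\ast_{R_{12}}R_2\iff R_3=R_{13}\ast_{R_0}R_{23}.\]
   Context: An SP1 equivalence relation on a standard Borel space $X$ with a non-atomic Borel probability measure $\mu$ is an equivalence relation $R\subset X\times X$ that is Borel, has countable classes, and preserves $\mu$. $S\vee T$ denotes the smallest SP equivalence relation containing $S$ and $T$. Free amalgamated join: for SP1 relations $S_1,S_2$ with common subrelation $T$, a sequence $x_1,\dots,x_n$ is reduced if each $(x_k,x_{k+1})$ lies in $S_1$ or $S_2$, successive pairs lie in distinct factors, for $n>2$ no pair lies in $T$, and for $n=2$, $x_1\ne x_2$. $S_1\vee S_2$ is the free amalgamated join $S_1\ast_T S_2$ if every reduced sequence has distinct endpoints (up to a set of measure zero). Triangle join: given SP1 relations $E_1,E_2,E_3$ with $R_{ij}=E_i\cap E_j$, $R_0=E_1\cap E_2\cap E_3$, $R_i=R_{ij}\vee R_{ik}$, $E_i^\circ=E_i\setminus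 R_i$, $R_{ij}^\circ=R_{ij}\setminus R_0$ ($\{i,j,k\}=\{1,2,3\}$): a sequence $x_1,\dots,x_n$ is triangle-reduced if (a) every consecutive pair lies in one of $E_1^\circ,E_2^\circ,E_3^\circ,R_{12}^\circ,R_{13}^\circ,R_{23}^\circ$ (its type); (b) if $(x_k,x_{k+1})\in E_l^\circ$ with $\{i,j,l\}=\{1,2,3\}$, each neighbouring pair (when it exists) lies in $E_i^\circ\sqcup E_j^\circ\sqcup R_{ij}^\circ$; (c) if $(x_k,x_{k+1})\in R_{ij}^\circ$ with $\{i,j,l\}=\{1,2,3\}$, each neighbouring pair (when it exists) lies in $E_l^\circ\sqcup R_{il}^\circ\sqcup R_{jl}^\circ$. It is proper of type I if its set of types contains one of $\{E_1^\circ,R_{23}^\circ\}$, $\{E_2^\circ,R_{13}^\circ\}$, $\{E_3^\circ,R_{12}^\circ\}$, $\{E_1^\circ,E_2^\circ\}$, $\{E_2^\circ,E_3^\circ\}$, $\{E_1^\circ,E_3^\circ\}$; proper of type II if its types include all of $R_{12}^\circ,R_{13}^\circ,R_{23}^\circ$ and none of the $E_i^\circ$. A loop is a sequence with $x_1=x_n$. $E_1\vee E_2\vee E_3$ is a triangle join over $R_{12},R_{23},R_{13}$ if every proper triangle-reduced sequence of type I has distinct endpoints and every proper triangle-reduced loop of type II is a concatenation of $R_i$-loops (closed subsequences whose consecutive pairs all lie in a single $R_i$). It is a minimal triangle join when $E_i=R_i$ for $i=1,2,3$. *)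

theory Defs
  imports "HOL-Probability.Probability"
begin

text \<open>A standard Borel space is modelled as a Polish space (type class polish_space)
  with its Borel sigma-algebra; the measure M lives on exactly these sets.\<close>

definition nonatomic :: "'a measure \<Rightarrow> bool" where
  "nonatomic M \<longleftrightarrow>
     \<not> (\<exists>A\<in>sets M. emeasure M A > 0 \<and>
          (\<forall>B\<in>sets M. B \<subseteq> A \<longrightarrow> emeasure M B = 0 \<or> emeasure M B = emeasure M A))"

definition std_nonatomic_prob :: "('a::polish_space) measure \<Rightarrow> bool" where
  "std_nonatomic_prob M \<longleftrightarrow> sets M = sets borel \<and> prob_space M \<and> nonatomic M"

definition rel_measure_preserving :: "'a measure \<Rightarrow> ('a \<times> 'a) set \<Rightarrow> bool" where
  "rel_measure_preserving M R \<longleftrightarrow>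
     (\<forall>A f. A \<in> sets M \<and> f \<in> M \<rightarrow>\<^sub>M M \<and> inj_on f A \<and> (\<forall>x\<in>A. (x, f x) \<in> R)
        \<longrightarrow> f ` A \<in> sets M \<and> emeasure M (f ` A) = emeasure M A)"

definition SP1 :: "'a measure \<Rightarrow> ('a \<times> 'a) set \<Rightarrow> bool" where
  "SP1 M R \<longleftrightarrow> equiv UNIV R \<and> R \<in> sets (M \<Otimes>\<^sub>M M) \<and> (\<forall>x. countable (R `` {x}))
                \<and> rel_measure_preserving M R"

definition eqjoin :: "('a \<times> 'a) set \<Rightarrow> ('a \<times> 'a) set \<Rightarrow> ('a \<times> 'a) set" where
  "eqjoin S T = (S \<union> T)\<^sup>*"

definition join3 :: "('a \<times> 'a) set \<Rightarrow> ('a \<times> 'a) set \<Rightarrow> ('a \<times> 'a) set \<Rightarrow> ('a \<times> 'a) set" where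
  "join3 S T U = (S \<union> T \<union> U)\<^sup>*"

definition step :: "'a list \<Rightarrow> nat \<Rightarrow> 'a \<times> 'a" where
  "step xs k = (xs ! k, xs ! Suc k)"

definition reduced :: "('a \<times> 'a) set \<Rightarrow> ('a \<times> 'a) set \<Rightarrow> ('a \<times> 'a) set \<Rightarrow> 'a list \<Rightarrow> bool" where
  "reduced S1 S2 T xs \<longleftrightarrow>
     length xs \<ge> 2 \<and>
     (\<exists>lab :: nat \<Rightarrow> bool.
        (\<forall>k < length xs - 1. step xs k \<in> (if lab k then S1 else S2)) \<and>
        (\<forall>k. Suc k < length xs - 1 \<longrightarrow> lab k \<noteq> lab (Suc k))) \<and>
     (length xs > 2 \<longrightarrow> (\<forall>k < length xs - 1. step xs k \<notin> T)) \<and>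
     (length xs = 2 \<longrightarrow> xs ! 0 \<noteq> xs ! 1)"

definition free_amalg :: "'a measure \<Rightarrow> ('a \<times> 'a) set \<Rightarrow> ('a \<times> 'a) set \<Rightarrow> ('a \<times> 'a) set \<Rightarrow> bool" where
  "free_amalg M S1 S2 T \<longleftrightarrow>
     (AE x in M. \<forall>xs. reduced S1 S2 T xs \<and> hd xs = x \<longrightarrow> last xs \<noteq> x)"

definition is_free_join :: "'a measure \<Rightarrow> ('a \<times> 'a) set \<Rightarrow> ('a \<times> 'a) set \<Rightarrow> ('a \<times> 'a) set
    \<Rightarrow> ('a \<times> 'a) set \<Rightarrow> bool" where
  "is_free_join M R S1 S2 T \<longleftrightarrow> R = eqjoin S1 S2 \<and> free_amalg M S1 S2 T"

datatype ttype = TE1 | TE2 | TE3 | TR12 | TR13 | TR23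

definition tri_R0 :: "('a \<times> 'a) set \<Rightarrow> ('a \<times> 'a) set \<Rightarrow> ('a \<times> 'a) set \<Rightarrow> ('a \<times> 'a) set" where
  "tri_R0 E1 E2 E3 = E1 \<inter> E2 \<inter> E3"

definition tri_Ri :: "('a \<times> 'a) set \<Rightarrow> ('a \<times> 'a) set \<Rightarrow> ('a \<times> 'a) set \<Rightarrow> nat \<Rightarrow> ('a \<times> 'a) set" where
  "tri_Ri E1 E2 E3 i =
     (if i = 1 then eqjoin (E1 \<inter> E2) (E1 \<inter> E3)
      else if i = 2 then eqjoin (E1 \<inter> E2) (E2 \<inter> E3)
      else eqjoin (E1 \<inter> E3) (E2 \<inter> E3))"

fun tri_piece :: "('a \<times> 'a) set \<Rightarrow> ('a \<times> 'a) set \<Rightarrow> ('a \<times> 'a) set \<Rightarrow> ttype \<Rightarrow> ('a \<times> 'a) set" where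
  "tri_piece E1 E2 E3 TE1 = E1 - tri_Ri E1 E2 E3 1"
| "tri_piece E1 E2 E3 TE2 = E2 - tri_Ri E1 E2 E3 2"
| "tri_piece E1 E2 E3 TE3 = E3 - tri_Ri E1 E2 E3 3"
| "tri_piece E1 E2 E3 TR12 = (E1 \<inter> E2) - tri_R0 E1 E2 E3"
| "tri_piece E1 E2 E3 TR13 = (E1 \<inter> E3) - tri_R0 E1 E2 E3"
| "tri_piece E1 E2 E3 TR23 = (E2 \<inter> E3) - tri_R0 E1 E2 E3"

text \<open>Allowed neighbours of a pair of a given type (conditions (b) and (c)).\<close>
fun tri_nbr :: "('a \<times> 'a) set \<Rightarrow> ('a \<times> 'a) set \<Rightarrow> ('a \<times> 'a) set \<Rightarrow> ttype \<Rightarrow> ('a \<times> 'a) set" where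
  "tri_nbr E1 E2 E3 TE1 = tri_piece E1 E2 E3 TE2 \<union> tri_piece E1 E2 E3 TE3 \<union> tri_piece E1 E2 E3 TR23"
| "tri_nbr E1 E2 E3 TE2 = tri_piece E1 E2 E3 TE1 \<union> tri_piece E1 E2 E3 TE3 \<union> tri_piece E1 E2 E3 TR13"
| "tri_nbr E1 E2 E3 TE3 = tri_piece E1 E2 E3 TE1 \<union> tri_piece E1 E2 E3 TE2 \<union> tri_piece E1 E2 E3 TR12"
| "tri_nbr E1 E2 E3 TR12 = tri_piece E1 E2 E3 TE3 \<union> tri_piece E1 E2 E3 TR13 \<union> tri_piece E1 E2 E3 TR23"
| "tri_nbr E1 E2 E3 TR13 = tri_piece E1 E2 E3 TE2 \<union> tri_piece E1 E2 E3 TR12 \<union> tri_piece E1 E2 E3 TR23"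
| "tri_nbr E1 E2 E3 TR23 = tri_piece E1 E2 E3 TE1 \<union> tri_piece E1 E2 E3 TR12 \<union> tri_piece E1 E2 E3 TR13"

definition tri_types :: "('a \<times> 'a) set \<Rightarrow> ('a \<times> 'a) set \<Rightarrow> ('a \<times> 'a) set \<Rightarrow> 'a list \<Rightarrow> ttype set" where
  "tri_types E1 E2 E3 xs = {t. \<exists>k < length xs - 1. step xs k \<in> tri_piece E1 E2 E3 t}"

definition tri_reduced :: "('a \<times> 'a) set \<Rightarrow> ('a \<times> 'a) set \<Rightarrow> ('a \<times> 'a) set \<Rightarrow> 'a list \<Rightarrow> bool" where
  "tri_reduced E1 E2 E3 xs \<longleftrightarrow>
     xs \<noteq> [] \<and>
     (\<forall>k < length xs - 1. \<exists>t. step xs k \<in> tri_piece E1 E2 E3 t \<and>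
        (k > 0 \<longrightarrow> step xs (k - 1) \<in> tri_nbr E1 E2 E3 t) \<and>
        (Suc k < length xs - 1 \<longrightarrow> step xs (Suc k) \<in> tri_nbr E1 E2 E3 t))"

definition proper_I :: "('a \<times> 'a) set \<Rightarrow> ('a \<times> 'a) set \<Rightarrow> ('a \<times> 'a) set \<Rightarrow> 'a list \<Rightarrow> bool" where
  "proper_I E1 E2 E3 xs \<longleftrightarrow>
     (let T = tri_types E1 E2 E3 xs in
       {TE1, TR23} \<subseteq> T \<or> {TE2, TR13} \<subseteq> T \<or> {TE3, TR12} \<subseteq> T \<or>
       {TE1, TE2} \<subseteq> T \<or> {TE2, TE3} \<subseteq> T \<or> {TE1, TE3} \<subseteq> T)"

definition proper_II :: "('a \<times> 'a) set \<Rightarrow> ('a \<times> 'a) set \<Rightarrow> ('a \<times> 'a) set \<Rightarrow> 'a list \<Rightarrow> bool" where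
  "proper_II E1 E2 E3 xs \<longleftrightarrow>
     (let T = tri_types E1 E2 E3 xs in
       {TR12, TR13, TR23} \<subseteq> T \<and> TE1 \<notin> T \<and> TE2 \<notin> T \<and> TE3 \<notin> T)"

text \<open>A loop xs is a concatenation of R_i-loops: it is cut at positions
  0 = j_0 < j_1 < ... < j_m = length xs - 1 into closed contiguous pieces,
  each of whose consecutive pairs all lie in a single R_i.\<close>
definition concat_Ri_loops :: "('a \<times> 'a) set \<Rightarrow> ('a \<times> 'a) set \<Rightarrow> ('a \<times> 'a) set \<Rightarrow> 'a list \<Rightarrow> bool" where
  "concat_Ri_loops E1 E2 E3 xs \<longleftrightarrow>
     (\<exists>js :: nat list. length js \<ge> 2 \<and> hd js = 0 \<and> last js = length xs - 1 \<and>
        sorted_wrt (<) js \<and>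
        (\<forall>t < length js - 1. xs ! (js ! t) = xs ! (js ! Suc t) \<and>
           (\<exists>i\<in>{1,2,3::nat}. \<forall>k. js ! t \<le> k \<and> k < js ! Suc t \<longrightarrow> step xs k \<in> tri_Ri E1 E2 E3 i)))"

definition triangle_join :: "'a measure \<Rightarrow> ('a \<times> 'a) set \<Rightarrow> ('a \<times> 'a) set \<Rightarrow> ('a \<times> 'a) set \<Rightarrow> bool" where
  "triangle_join M E1 E2 E3 \<longleftrightarrow>
     (AE x in M. \<forall>xs. tri_reduced E1 E2 E3 xs \<and> proper_I E1 E2 E3 xs \<and> hd xs = x \<longrightarrow> last xs \<noteq> x) \<and>
     (AE x in M. \<forall>xs. tri_reduced E1 E2 E3 xs \<and> proper_II E1 E2 E3 xs \<and> hd xs = x \<and> last xs = x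
                  \<longrightarrow> concat_Ri_loops E1 E2 E3 xs)"

definition minimal_triangle_join :: "'a measure \<Rightarrow> ('a \<times> 'a) set \<Rightarrow> ('a \<times> 'a) set \<Rightarrow> ('a \<times> 'a) set \<Rightarrow> bool" where
  "minimal_triangle_join M E1 E2 E3 \<longleftrightarrow>
     triangle_join M E1 E2 E3 \<and> (\<forall>i\<in>{1,2,3::nat}. [E1, E2, E3] ! (i - 1) = tri_Ri E1 E2 E3 i)"

end

theory Submission
  imports Defs
begin

definition stp :: "'a list \<Rightarrow> ('a \<times> 'a) list" where "stp xs = zip xs (tl xs)"

lemma length_stp[simp]: "length (stp xs) = length xs - 1"
  by (simp add: stp_def)

lemma nth_stp: "k < length xs - 1 \<Longrightarrow> stp xs ! k = step xs k"
  by (cases xs) (auto simp: stp_def step_def)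

lemma set_stp: "q \<in> set (stp xs) \<longleftrightarrow> (\<exists>k < length xs - 1. q = step xs k)"
  by (auto simp: in_set_conv_nth nth_stp)

lemma stp_Nil[simp]: "stp [] = []" and stp_single[simp]: "stp [a] = []"
  and stp_Cons2[simp]: "stp (a # b # xs) = (a, b) # stp (b # xs)"
  by (auto simp: stp_def)

lemma stp_append: "xs \<noteq> [] \<Longrightarrow> ys \<noteq> [] \<Longrightarrow> last xs = hd ys \<Longrightarrow> stp (xs @ tl ys) = stp xs @ stp ys"
proof (induction xs)
  case Nil then show ?case by simp
next
  case (Cons a xs)
  show ?case
  proof (cases xs)
    case Nil
    then show ?thesis using Cons.prems by (cases ys) auto
  next
    case (Cons b zs)
    then show ?thesis using Cons.IH Cons.prems by auto
  qed
qed

lemma last_take_Suc: "i < length xs \<Longrightarrow> last (take (Suc i) xs) = xs ! i"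
proof -
  assume h: "i < length xs"
  have "take (Suc i) xs \<noteq> []" using h by (cases xs) auto
  then show ?thesis using h by (auto simp: last_conv_nth min_def intro!: arg_cong[where f="(!) xs"])
qed

lemma stp_ne: "2 \<le> length xs \<Longrightarrow> stp xs \<noteq> []"
  by (cases xs; cases "tl xs") auto

definition pth :: "('a \<times> 'a) set \<Rightarrow> 'a list \<Rightarrow> bool" where
  "pth S c \<longleftrightarrow> (\<forall>k < length c - 1. step c k \<in> S)"

lemma pth_relpow: "c \<noteq> [] \<Longrightarrow> pth S c \<Longrightarrow> (hd c, last c) \<in> S ^^ (length c - 1)"
  unfolding relpow_fun_conv pth_def step_def
  by (rule exI[of _ "(!) c"]) (auto simp: hd_conv_nth last_conv_nth)

lemma relpow_pth: "(a, b) \<in> S ^^ m \<Longrightarrow> \<exists>c. length c = Suc m \<and> hd c = a \<and> last c = b \<and> pth S c"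
proof -
  assume "(a, b) \<in> S ^^ m"
  then obtain f where f: "f 0 = a" "f m = b" "\<forall>i<m. (f i, f (Suc i)) \<in> S"
    unfolding relpow_fun_conv by blast
  let ?c = "map f [0..<Suc m]"
  have "length ?c = Suc m" by simp
  moreover have "hd ?c = a" using f by (simp del: upt_Suc add: hd_map)
  moreover have "last ?c = b" using f by (simp add: last_map)
  moreover have "pth S ?c" unfolding pth_def step_def using f(3)
    by (auto simp del: upt_Suc simp: nth_append)
  ultimately show ?thesis by blast
qed

lemma pth_rtrancl: "c \<noteq> [] \<Longrightarrow> pth S c \<Longrightarrow> (hd c, last c) \<in> S\<^sup>*"
  using pth_relpow relpow_imp_rtrancl by blast

lemma pth_drop: "pth S c \<Longrightarrow> pth S (drop i c)"
  unfolding pth_def step_def by (auto simp: add.commute)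

lemma pth_take: "pth S c \<Longrightarrow> pth S (take i c)"
  unfolding pth_def step_def by auto

lemma pth_del:
  assumes "pth S c" "Suc (Suc k) < length c" "(c ! k, c ! Suc (Suc k)) \<in> S"
  shows "pth S (take (Suc k) c @ drop (Suc (Suc k)) c)"
  unfolding pth_def step_def
proof (intro allI impI)
  fix i assume i: "i < length (take (Suc k) c @ drop (Suc (Suc k)) c) - 1"
  consider "i < k" | "i = k" | "i > k" by linarith
  then show "((take (Suc k) c @ drop (Suc (Suc k)) c) ! i, (take (Suc k) c @ drop (Suc (Suc k)) c) ! Suc i) \<in> S"
  proof cases
    case 1 then show ?thesis using assms i unfolding pth_def step_def by (auto simp: nth_append)
  next
    case 2 then show ?thesis using assms i unfolding pth_def step_def by (auto simp: nth_append)
  next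
    case 3
    then have "Suc (Suc i) < length c" using i assms by auto
    then have "(c ! Suc i, c ! Suc (Suc i)) \<in> S" using assms(1) unfolding pth_def step_def by auto
    then show ?thesis using 3 assms(2) by (auto simp: nth_append)
  qed
qed

lemma successively_concat:
  "(\<forall>xs\<in>set xss. xs \<noteq> [] \<and> successively P xs) \<Longrightarrow> successively (\<lambda>xs ys. P (last xs) (hd ys)) xss
   \<Longrightarrow> successively P (concat xss)"
proof (induction xss)
  case Nil then show ?case by simp
next
  case (Cons xs xss)
  then show ?case
    by (cases xss) (auto simp: successively_append_iff successively_Cons)
qed


locale tri =
  fixes A B C :: "('a \<times> 'a) set"
  assumes eA: "equiv UNIV A" and eB: "equiv UNIV B" and eC: "equiv UNIV C"
    and i12: "(A \<union> B)\<^sup>* \<inter> (A \<union> C)\<^sup>* = A"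
    and i13: "(A \<union> B)\<^sup>* \<inter> (B \<union> C)\<^sup>* = B"
    and i23: "(A \<union> C)\<^sup>* \<inter> (B \<union> C)\<^sup>* = C"
begin

definition X :: "bool \<Rightarrow> ('a \<times> 'a) set" where "X l = (if l then B else C)"
definition S :: "bool \<Rightarrow> ('a \<times> 'a) set" where "S l = A \<union> X l"
definition RR :: "bool \<Rightarrow> ('a \<times> 'a) set" where "RR l = (S l)\<^sup>*"
abbreviation R0 where "R0 \<equiv> A \<inter> B \<inter> C"

lemma eqX: "equiv UNIV (X l)" using eB eC by (simp add: X_def)

lemma transE: "equiv UNIV E \<Longrightarrow> (a, b) \<in> E \<Longrightarrow> (b, c) \<in> E \<Longrightarrow> (a, c) \<in> E"
  unfolding equiv_def trans_def by blast
lemma reflE: "equiv UNIV E \<Longrightarrow> (a, a) \<in> E"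
  unfolding equiv_def refl_on_def by blast
lemma symE: "equiv UNIV E \<Longrightarrow> (a, b) \<in> E \<Longrightarrow> (b, a) \<in> E"
  unfolding equiv_def sym_def by blast

lemma A_RR: "A \<subseteq> RR l" unfolding RR_def S_def by auto
lemma X_RR: "X l \<subseteq> RR l" unfolding RR_def S_def by auto
lemma S_RR: "S l \<subseteq> RR l" unfolding RR_def by auto
lemma trans_RR: "(a, b) \<in> RR l \<Longrightarrow> (b, c) \<in> RR l \<Longrightarrow> (a, c) \<in> RR l"
  unfolding RR_def by simp

lemma RR_T: "RR True = (A \<union> B)\<^sup>*" and RR_F: "RR False = (A \<union> C)\<^sup>*"
  by (simp_all add: RR_def S_def X_def)

lemma RR_int: "RR True \<inter> RR False = A" using i12 by (simp add: RR_T RR_F)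

lemma AB: "A \<inter> B \<subseteq> C"
proof -
  have "A \<inter> B \<subseteq> (A \<union> C)\<^sup>* \<inter> (B \<union> C)\<^sup>*" by auto
  then show ?thesis using i23 by simp
qed
lemma AC: "A \<inter> C \<subseteq> B"
proof -
  have "A \<inter> C \<subseteq> (A \<union> B)\<^sup>* \<inter> (B \<union> C)\<^sup>*" by auto
  then show ?thesis using i13 by simp
qed
lemma BC: "B \<inter> C \<subseteq> A"
proof -
  have "B \<inter> C \<subseteq> (A \<union> B)\<^sup>* \<inter> (A \<union> C)\<^sup>*" by auto
  then show ?thesis using i12 by simp
qed

lemma X_other: "X l \<inter> RR (\<not> l) \<subseteq> R0"
proof (cases l)
  case True
  have "B \<subseteq> RR True" using X_RR[of True] by (simp add: X_def)
  then have "B \<inter> RR False \<subseteq> A" using RR_int by blast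
  then show ?thesis using True AB by (auto simp: X_def)
next
  case False
  have "C \<subseteq> RR False" using X_RR[of False] by (simp add: X_def)
  then have "C \<inter> RR True \<subseteq> A" using RR_int by blast
  then show ?thesis using False AC by (auto simp: X_def)
qed

lemma A_X: "A \<inter> X l \<subseteq> R0" using AB AC by (auto simp: X_def)

lemma A_R3: "A \<inter> (B \<union> C)\<^sup>* \<subseteq> R0"
proof -
  have "A \<subseteq> (A \<union> B)\<^sup>*" by auto
  then have "A \<inter> (B \<union> C)\<^sup>* \<subseteq> B" using i13 by blast
  then show ?thesis using AB by blast
qed

lemma S_notother: "q \<in> S l \<Longrightarrow> q \<notin> R0 \<Longrightarrow> q \<notin> X (\<not> l)"
  using A_X[of "\<not> l"] BC by (cases l) (auto simp: S_def X_def)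

subsection \<open>Shortest paths\<close>

definition dd :: "bool \<Rightarrow> 'a \<Rightarrow> 'a \<Rightarrow> nat" where
  "dd l a b = (LEAST m. (a, b) \<in> (S l) ^^ m)"

definition ch :: "bool \<Rightarrow> 'a \<Rightarrow> 'a \<Rightarrow> 'a list" where
  "ch l a b = (SOME c. length c = Suc (dd l a b) \<and> hd c = a \<and> last c = b \<and> pth (S l) c)"

lemma ch: assumes "(a, b) \<in> RR l"
  shows "length (ch l a b) = Suc (dd l a b)" "hd (ch l a b) = a" "last (ch l a b) = b"
    "pth (S l) (ch l a b)"
proof -
  have "\<exists>m. (a, b) \<in> (S l) ^^ m" using assms unfolding RR_def by (simp add: rtrancl_power)
  then have "(a, b) \<in> (S l) ^^ dd l a b" unfolding dd_def by (rule LeastI_ex)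
  then have "\<exists>c. length c = Suc (dd l a b) \<and> hd c = a \<and> last c = b \<and> pth (S l) c"
    by (rule relpow_pth)
  then have "length (ch l a b) = Suc (dd l a b) \<and> hd (ch l a b) = a \<and> last (ch l a b) = b \<and> pth (S l) (ch l a b)"
    unfolding ch_def by (rule someI_ex)
  then show "length (ch l a b) = Suc (dd l a b)" "hd (ch l a b) = a" "last (ch l a b) = b"
    "pth (S l) (ch l a b)" by auto
qed

lemma dd_le: "c \<noteq> [] \<Longrightarrow> pth (S l) c \<Longrightarrow> dd l (hd c) (last c) \<le> length c - 1"
  unfolding dd_def by (rule Least_le) (rule pth_relpow)

lemma ch_props:
  assumes ab: "(a, b) \<in> RR l" and nA: "(a, b) \<notin> A"
  defines "c \<equiv> ch l a b"
  shows "2 \<le> length c"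
    and "\<And>k. Suc k < length c - 1 \<Longrightarrow> \<not> (step c k \<in> A \<and> step c (Suc k) \<in> A)"
    and "\<And>k. Suc k < length c - 1 \<Longrightarrow> \<not> (step c k \<in> X l \<and> step c (Suc k) \<in> X l)"
    and "\<And>i. 0 < i \<Longrightarrow> i < length c \<Longrightarrow> c ! i \<noteq> a"
    and "\<And>i. i < length c - 1 \<Longrightarrow> c ! i \<noteq> b"
    and "\<And>i. i < length c \<Longrightarrow> (a, c ! i) \<in> RR l"
    and "\<And>i. i < length c \<Longrightarrow> (c ! i, b) \<in> RR l"
    and "\<And>k. k < length c - 1 \<Longrightarrow> step c k \<in> S l - R0"
    and "\<exists>k < length c - 1. step c k \<in> X l"
proof -
  note c = ch[OF ab, folded c_def]
  have cne: "c \<noteq> []" using c(1) by auto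
  have hd0: "c ! 0 = a" using c(2) cne by (simp add: hd_conv_nth)
  have lastn: "c ! (length c - 1) = b" using c(3) cne by (simp add: last_conv_nth)
  show len2: "2 \<le> length c"
  proof (rule ccontr)
    assume h2: "\<not> 2 \<le> length c"
    have "length c \<noteq> 0" using cne by simp
    then have "length c = 1" using h2 by linarith
    then have "a = b" using hd0 lastn by auto
    then show False using nA reflE[OF eA] by auto
  qed
  have short: False if "c' \<noteq> []" "pth (S l) c'" "hd c' = a" "last c' = b" "length c' < length c" for c'
    using dd_le[OF that(1,2)] that(3-5) c(1) that(1) by (cases c') auto
  have del: "\<not> (step c k \<in> E \<and> step c (Suc k) \<in> E)" if "Suc k < length c - 1" "equiv UNIV E" "E \<subseteq> S l" for k E
  proof
    assume h: "step c k \<in> E \<and> step c (Suc k) \<in> E"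
    then have "(c ! k, c ! Suc (Suc k)) \<in> E" using transE[OF that(2)] unfolding step_def by blast
    then have "(c ! k, c ! Suc (Suc k)) \<in> S l" using that(3) by blast
    then have p: "pth (S l) (take (Suc k) c @ drop (Suc (Suc k)) c)"
      using pth_del[OF c(4)] that(1) by auto
    show False
      apply (rule short[OF _ p])
      using that(1) c(2,3) cne by (auto simp: hd_append)
  qed
  show "\<And>k. Suc k < length c - 1 \<Longrightarrow> \<not> (step c k \<in> A \<and> step c (Suc k) \<in> A)"
    using del[OF _ eA] by (auto simp: S_def)
  show "\<And>k. Suc k < length c - 1 \<Longrightarrow> \<not> (step c k \<in> X l \<and> step c (Suc k) \<in> X l)"
    using del[OF _ eqX] by (auto simp: S_def)
  show "c ! i \<noteq> a" if "0 < i" "i < length c" for i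
  proof
    assume h: "c ! i = a"
    show False
      apply (rule short[OF _ pth_drop[OF c(4)], of i])
      using that h c(3) by (auto simp: hd_drop_conv_nth)
  qed
  show "c ! i \<noteq> b" if "i < length c - 1" for i
  proof
    assume h: "c ! i = b"
    show False
      apply (rule short[OF _ pth_take[OF c(4)], of "Suc i"])
      using that h c(2) cne by (auto simp: last_take_Suc hd_take)
  qed
  show "(a, c ! i) \<in> RR l" if "i < length c" for i
    using pth_rtrancl[OF _ pth_take[OF c(4)], of "Suc i"] that c(2) cne
    by (auto simp: RR_def last_take_Suc hd_take)
  show "(c ! i, b) \<in> RR l" if "i < length c" for i
    using pth_rtrancl[OF _ pth_drop[OF c(4)], of i] that c(3)
    by (auto simp: RR_def hd_drop_conv_nth)
  have inS: "step c k \<in> S l" if "k < length c - 1" for k using c(4) that by (auto simp: pth_def)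
  have R0S: "R0 \<subseteq> A" "R0 \<subseteq> X l" by (auto simp: X_def)
  show "step c k \<in> S l - R0" if k: "k < length c - 1" for k
  proof (cases "length c = 2")
    case True
    then have "k = 0" using k by auto
    then have "step c k = (a, b)" using hd0 lastn True by (simp add: step_def)
    then show ?thesis using nA inS[OF k] by auto
  next
    case False
    show ?thesis
    proof
      show "step c k \<in> S l" by (rule inS[OF k])
      show "step c k \<notin> R0"
      proof
        assume r0: "step c k \<in> R0"
        show False
        proof (cases "Suc k < length c - 1")
          case True
          have "step c (Suc k) \<in> S l" using inS True by auto
          then show False using r0 R0S del[OF True eA] del[OF True eqX] by (auto simp: S_def)
        next
          case F: False
          then have k1: "0 < k" using False len2 k by auto
          then have "Suc (k - 1) < length c - 1" using k by auto
          moreover have "step c (k - 1) \<in> S l" using inS k by auto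
          ultimately show False using r0 R0S del[OF _ eA, of "k-1"] del[OF _ eqX, of "k-1"] k1
            by (auto simp: S_def)
        qed
      qed
    qed
  qed
  show "\<exists>k < length c - 1. step c k \<in> X l"
  proof (cases "length c = 2")
    case True
    then have "step c 0 = (a, b)" using hd0 lastn by (simp add: step_def)
    then show ?thesis using nA inS[of 0] True by (auto simp: S_def)
  next
    case False
    then have "Suc 0 < length c - 1" using len2 by auto
    then have "step c 0 \<in> X l \<or> step c 1 \<in> X l" using del[OF _ eA, of 0] inS[of 0] inS[of 1] by (auto simp: S_def)
    then show ?thesis using \<open>Suc 0 < length c - 1\<close> by (metis One_nat_def less_trans zero_less_one)
  qed
qed

subsection \<open>Alternating loops and expansions\<close>

definition lab :: "'a \<times> 'a \<Rightarrow> bool" where "lab q = (q \<in> RR True)"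

lemma lab_eq: "q \<in> RR l \<Longrightarrow> q \<notin> A \<Longrightarrow> lab q = l"
  using RR_int by (cases l) (auto simp: lab_def)

definition goodq :: "'a \<times> 'a \<Rightarrow> bool" where "goodq q \<longleftrightarrow> q \<notin> A \<and> q \<in> RR True \<union> RR False"

lemma goodq_RR: "goodq q \<Longrightarrow> q \<in> RR (lab q)"
  by (cases "q \<in> RR True") (auto simp: lab_def goodq_def)

definition chq :: "'a \<times> 'a \<Rightarrow> 'a list" where "chq q = ch (lab q) (fst q) (snd q)"
definition D :: "'a \<times> 'a \<Rightarrow> nat" where "D q = dd (lab q) (fst q) (snd q)"
definition cost :: "'a list \<Rightarrow> nat" where "cost W = (\<Sum>k<length W - 1. D (step W k))"

definition altW :: "'a \<Rightarrow> 'a list \<Rightarrow> bool" where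
  "altW x W \<longleftrightarrow> 3 \<le> length W \<and> hd W = x \<and> last W = x \<and> (\<forall>k<length W - 1. goodq (step W k)) \<and>
     (\<forall>k. Suc k < length W - 1 \<longrightarrow> lab (step W k) \<noteq> lab (step W (Suc k)))"

lemma chq_basic:
  assumes "goodq q"
  shows "2 \<le> length (chq q)" "hd (chq q) = fst q" "last (chq q) = snd q"
proof -
  have q: "(fst q, snd q) \<in> RR (lab q)" "(fst q, snd q) \<notin> A" using assms goodq_RR[OF assms]
    by (auto simp: goodq_def)
  show "2 \<le> length (chq q)" using ch_props(1)[OF q] by (simp add: chq_def)
  show "hd (chq q) = fst q" "last (chq q) = snd q" using ch(2,3)[OF q(1)] by (auto simp: chq_def)
qed

fun ex :: "'a list \<Rightarrow> 'a list" where
  "ex [] = []"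
| "ex [a] = [a]"
| "ex (a # b # rs) = chq (a, b) @ tl (ex (b # rs))"

lemma ex_basic:
  "W \<noteq> [] \<Longrightarrow> \<forall>q\<in>set (stp W). goodq q \<Longrightarrow>
    ex W \<noteq> [] \<and> hd (ex W) = hd W \<and> last (ex W) = last W \<and> length W \<le> length (ex W)"
proof (induction W rule: ex.induct)
  case (3 a b rs)
  have g: "goodq (a, b)" using "3.prems" by auto
  note c = chq_basic[OF g]
  have IH: "ex (b # rs) \<noteq> [] \<and> hd (ex (b # rs)) = b \<and> last (ex (b # rs)) = last (b # rs) \<and>
      length (b # rs) \<le> length (ex (b # rs))" using "3.IH" "3.prems" by auto
  show ?case
  proof (cases "tl (ex (b # rs)) = []")
    case True
    then have "ex (b # rs) = [b]" using IH by (cases "ex (b # rs)") auto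
    then have "rs = []" using IH by auto
    then show ?thesis using c True IH by auto
  next
    case False
    have "length (ex (b # rs)) = Suc (length (tl (ex (b # rs))))" using IH by (cases "ex (b # rs)") auto
    moreover have "chq (a, b) \<noteq> []" using c by auto
    moreover have "last (tl (ex (b # rs))) = last (b # rs)" using False IH by (simp add: last_tl)
    ultimately show ?thesis using c False IH by (simp add: hd_append; linarith)
  qed
qed auto

lemma ex_stp:
  "W \<noteq> [] \<Longrightarrow> \<forall>q\<in>set (stp W). goodq q \<Longrightarrow> stp (ex W) = concat (map (\<lambda>q. stp (chq q)) (stp W))"
proof (induction W rule: ex.induct)
  case (3 a b rs)
  have g: "goodq (a, b)" using "3.prems" by auto
  note c = chq_basic[OF g]
  note e = ex_basic[of "b # rs"]
  have "stp (ex (a # b # rs)) = stp (chq (a, b)) @ stp (ex (b # rs))"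
    using c e "3.prems" by (auto intro!: stp_append)
  then show ?case using "3.IH" "3.prems" by auto
qed auto

definition inr :: "'a list \<Rightarrow> 'a set" where "inr xs = set (butlast (tl xs))"

lemma inr_nth: "0 < j \<Longrightarrow> j < length xs - 1 \<Longrightarrow> xs ! j \<in> inr xs"
proof -
  assume j: "0 < j" "j < length xs - 1"
  have "butlast (tl xs) ! (j - 1) = xs ! j" using j by (auto simp: nth_butlast nth_tl)
  moreover have "j - 1 < length (butlast (tl xs))" using j by auto
  ultimately show ?thesis unfolding inr_def by (metis nth_mem)
qed

lemma inr_nthD: "y \<in> inr xs \<Longrightarrow> \<exists>j. 0 < j \<and> j < length xs - 1 \<and> xs ! j = y"
proof -
  assume "y \<in> inr xs"
  then obtain i where i: "i < length (butlast (tl xs))" "butlast (tl xs) ! i = y"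
    unfolding inr_def by (auto simp: in_set_conv_nth)
  then have "xs ! Suc i = y" by (auto simp: nth_butlast nth_tl)
  then show ?thesis using i by (intro exI[of _ "Suc i"]) auto
qed

lemma inr_app:
  assumes "2 \<le> length c" "2 \<le> length e" "last c = hd e"
  shows "inr (c @ tl e) = inr c \<union> {last c} \<union> inr e"
proof -
  obtain c0 ct where c: "c = c0 # ct" "ct \<noteq> []" using assms(1) by (cases c; cases "tl c") auto
  obtain e0 et where e: "e = e0 # et" "et \<noteq> []" using assms(2) by (cases e; cases "tl e") auto
  have sct: "set ct = set (butlast ct @ [last ct])" using c(2) by simp
  have "inr (c @ tl e) = set (ct @ butlast et)" using c e by (simp add: inr_def butlast_append)
  also have "\<dots> = set (butlast ct) \<union> {last ct} \<union> set (butlast et)"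
    using sct by auto
  finally show ?thesis using c e by (simp add: inr_def)
qed

lemma ex_inr:
  "W \<noteq> [] \<Longrightarrow> \<forall>q\<in>set (stp W). goodq q \<Longrightarrow> x \<notin> inr W \<Longrightarrow> \<forall>q\<in>set (stp W). x \<notin> inr (chq q)
   \<Longrightarrow> x \<notin> inr (ex W)"
proof (induction W rule: ex.induct)
  case (3 a b rs)
  have g: "goodq (a, b)" using "3.prems" by auto
  note c = chq_basic[OF g]
  show ?case
  proof (cases "rs = []")
    case True
    then show ?thesis using "3.prems" by auto
  next
    case False
    note e = ex_basic[of "b # rs"]
    have le: "2 \<le> length (ex (b # rs))" using e "3.prems" False by (cases rs) auto
    have inr1: "inr (ex (a # b # rs)) = inr (chq (a, b)) \<union> {b} \<union> inr (ex (b # rs))"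
      using inr_app[OF c(1) le] c e "3.prems" by auto
    have "b \<in> inr (a # b # rs)" using False by (cases rs) (auto simp: inr_def)
    moreover have "inr (b # rs) \<subseteq> inr (a # b # rs)" using False
      by (cases rs) (auto simp: inr_def in_set_butlastD)
    ultimately show ?thesis using inr1 "3.IH" "3.prems" by auto
  qed
qed auto

lemma min_W:
  assumes "altW x W0"
  shows "\<exists>W. altW x W \<and> (\<forall>W'. altW x W' \<longrightarrow> length W \<le> length W') \<and>
     (\<forall>W'. altW x W' \<longrightarrow> length W' = length W \<longrightarrow> cost W \<le> cost W')"
proof -
  obtain W1 where W1: "altW x W1" "\<forall>W'. altW x W' \<longrightarrow> length W1 \<le> length W'"
    using ex_has_least_nat[of "altW x" W0 length] assms by blast
  obtain W where W: "altW x W \<and> length W = length W1"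
    "\<forall>W'. altW x W' \<and> length W' = length W1 \<longrightarrow> cost W \<le> cost W'"
    using ex_has_least_nat[of "\<lambda>W. altW x W \<and> length W = length W1" W1 cost] W1(1) by blast
  then show ?thesis using W1 by (intro exI[of _ W]) auto
qed

lemma F1:
  assumes aw: "altW x W" and ml: "\<forall>W'. altW x W' \<longrightarrow> length W \<le> length W'"
    and j: "0 < j" "j < length W - 1"
  shows "W ! j \<noteq> x"
proof
  assume h: "W ! j = x"
  have Wne: "W \<noteq> []" using aw by (auto simp: altW_def)
  have W0: "W ! 0 = x" using aw Wne by (auto simp: altW_def hd_conv_nth)
  have "j \<noteq> 1"
  proof
    assume "j = 1"
    then have "step W 0 = (x, x)" using W0 h by (simp add: step_def)
    moreover have "goodq (step W 0)" using aw j by (auto simp: altW_def)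
    ultimately show False using reflE[OF eA] by (auto simp: goodq_def)
  qed
  then have j2: "2 \<le> j" using j by auto
  have st: "step (take (Suc j) W) k = step W k" if "k < j" for k
    using that j by (simp add: step_def)
  have len: "length (take (Suc j) W) = Suc j" using j by simp
  have "altW x (take (Suc j) W)"
    unfolding altW_def len
  proof (intro conjI allI impI)
    show "3 \<le> Suc j" using j2 by simp
    show "hd (take (Suc j) W) = x" using aw by (simp add: altW_def)
    show "last (take (Suc j) W) = x" using h j by (simp add: last_take_Suc)
    show "goodq (step (take (Suc j) W) k)" if "k < Suc j - 1" for k
      using that aw j by (auto simp: st altW_def)
    show "lab (step (take (Suc j) W) k) \<noteq> lab (step (take (Suc j) W) (Suc k))" if "Suc k < Suc j - 1" for k
      using that aw j by (auto simp: st altW_def)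
  qed
  then have "length W \<le> Suc j" using ml by fastforce
  then show False using j by auto
qed


lemma altW_facts:
  assumes "altW x W"
  shows "W \<noteq> []" "W ! 0 = x" "W ! (length W - 1) = x" "3 \<le> length W"
    "\<And>k. k < length W - 1 \<Longrightarrow> goodq (step W k)"
    "\<And>k. Suc k < length W - 1 \<Longrightarrow> lab (step W k) \<noteq> lab (step W (Suc k))"
proof -
  show ne: "W \<noteq> []" using assms by (auto simp: altW_def)
  show "W ! 0 = x" using assms ne by (simp add: altW_def hd_conv_nth[symmetric])
  show "W ! (length W - 1) = x" using assms ne by (metis altW_def last_conv_nth)
qed (use assms in \<open>auto simp: altW_def\<close>)

lemma F2:
  assumes aw: "altW x W" and ml: "\<forall>W'. altW x W' \<longrightarrow> length W \<le> length W'"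
    and k: "k < length W - 1"
  shows "x \<notin> inr (chq (step W k))"
proof
  assume "x \<in> inr (chq (step W k))"
  then obtain i where i: "0 < i" "i < length (chq (step W k)) - 1" "chq (step W k) ! i = x"
    using inr_nthD by blast
  have ilt: "i < length (chq (step W k))" using i by linarith
  note wf = altW_facts[OF aw]
  define a where "a = W ! k"
  define b where "b = W ! Suc k"
  define l where "l = lab (step W k)"
  have sq: "step W k = (a, b)" by (simp add: step_def a_def b_def)
  have g: "goodq (a, b)" using wf(5)[OF k] sq by simp
  have ab: "(a, b) \<in> RR l" using goodq_RR[OF g] sq l_def by simp
  have nA: "(a, b) \<notin> A" using g by (simp add: goodq_def)
  have cdef: "chq (step W k) = ch l a b" using sq l_def by (simp add: chq_def)
  note P = ch_props[OF ab nA, folded cdef]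
  consider (first) "k = 0" | (last) "Suc k = length W - 1" | (mid) "0 < k" "Suc k < length W - 1"
    using k by linarith
  then show False
  proof cases
    case first
    then have "a = x" using wf(2) a_def by simp
    then show False using P(4)[OF i(1) ilt] i by auto
  next
    case last
    then have "b = x" using wf(3) b_def by simp
    then show False using P(5)[of i] i by auto
  next
    case mid
    have xa: "(a, x) \<in> RR l" using P(6)[of i] i by auto
    have xb: "(x, b) \<in> RR l" using P(7)[of i] i by auto
    show False
    proof (cases "(x, b) \<in> A")
      case False
      define W' where "W' = x # drop (Suc k) W"
      have len: "length W' = length W - k" using k by (simp add: W'_def)
      have st0: "step W' 0 = (x, b)" using k by (simp add: W'_def step_def b_def)
      have stS: "step W' (Suc m) = step W (Suc k + m)" if "Suc m < length W' - 1" for m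
        using that len k by (simp add: W'_def step_def)
      have labxb: "lab (x, b) = l" using lab_eq[OF xb False] .
      have "altW x W'"
        unfolding altW_def
      proof (intro conjI allI impI)
        show "3 \<le> length W'" using len mid by simp
        show "hd W' = x" by (simp add: W'_def)
        show "last W' = x" using k aw by (simp add: W'_def altW_def)
        show "goodq (step W' m)" if "m < length W' - 1" for m
        proof (cases m)
          case 0
          then show ?thesis using st0 False xb by (cases l) (auto simp: goodq_def)
        next
          case (Suc m')
          then show ?thesis using stS[of m'] that len wf(5)[of "Suc k + m'"] by auto
        qed
        show "lab (step W' m) \<noteq> lab (step W' (Suc m))" if "Suc m < length W' - 1" for m
        proof (cases m)
          case 0
          then show ?thesis using st0 stS[of 0] labxb l_def wf(6)[of k] that mid by simp
        next
          case (Suc m')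
          then show ?thesis using stS[of m'] stS[of "Suc m'"] that len wf(6)[of "Suc k + m'"] by auto
        qed
      qed
      then have "length W \<le> length W'" using ml by blast
      then show False using len mid by simp
    next
      case True
      have nxa: "(a, x) \<notin> A"
      proof
        assume "(a, x) \<in> A"
        then have "(a, b) \<in> A" using True transE[OF eA] by blast
        then show False using nA by simp
      qed
      define W' where "W' = take (Suc k) W @ [x]"
      have len: "length W' = Suc (Suc k)" using k by (simp add: W'_def)
      have stl: "step W' m = step W m" if "m < k" for m
        using that k by (simp add: W'_def step_def nth_append)
      have stk: "step W' k = (a, x)" using k by (simp add: W'_def step_def nth_append a_def)
      have labxa: "lab (a, x) = l" using lab_eq[OF xa nxa] .
      have "altW x W'"
        unfolding altW_def
      proof (intro conjI allI impI)
        show "3 \<le> length W'" using len mid by simp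
        show "hd W' = x" using aw wf(1) by (simp add: W'_def altW_def hd_append)
        show "last W' = x" by (simp add: W'_def)
        show "goodq (step W' m)" if "m < length W' - 1" for m
        proof (cases "m = k")
          case True
          then show ?thesis using stk nxa xa by (cases l) (auto simp: goodq_def)
        next
          case False
          then show ?thesis using stl[of m] that len wf(5)[of m] k by auto
        qed
        show "lab (step W' m) \<noteq> lab (step W' (Suc m))" if "Suc m < length W' - 1" for m
        proof (cases "Suc m = k")
          case True
          then show ?thesis using stk stl[of m] labxa l_def wf(6)[of m] k by auto
        next
          case False
          then show ?thesis using stl[of m] stl[of "Suc m"] that len wf(6)[of m] k by auto
        qed
      qed
      then have "length W \<le> length W'" using ml by blast
      then show False using len mid by simp
    qed
  qed
qed


lemma F3:
  assumes aw: "altW x W"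
    and mc: "\<forall>W'. altW x W' \<longrightarrow> length W' = length W \<longrightarrow> cost W \<le> cost W'"
    and k: "Suc k < length W - 1"
  shows "\<not> (last (stp (chq (step W k))) \<in> A \<and> hd (stp (chq (step W (Suc k)))) \<in> A)"
proof
  assume h: "last (stp (chq (step W k))) \<in> A \<and> hd (stp (chq (step W (Suc k)))) \<in> A"
  note wf = altW_facts[OF aw]
  define a where "a = W ! k"
  define b where "b = W ! Suc k"
  define e where "e = W ! Suc (Suc k)"
  define l1 where "l1 = lab (step W k)"
  define l2 where "l2 = lab (step W (Suc k))"
  have sq1: "step W k = (a, b)" by (simp add: step_def a_def b_def)
  have sq2: "step W (Suc k) = (b, e)" by (simp add: step_def e_def b_def)
  have g1: "goodq (a, b)" using wf(5)[of k] k sq1 by simp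
  have g2: "goodq (b, e)" using wf(5)[of "Suc k"] k sq2 by simp
  have ab: "(a, b) \<in> RR l1" using goodq_RR[OF g1] sq1 l1_def by simp
  have be: "(b, e) \<in> RR l2" using goodq_RR[OF g2] sq2 l2_def by simp
  have nab: "(a, b) \<notin> A" using g1 by (simp add: goodq_def)
  have nbe: "(b, e) \<notin> A" using g2 by (simp add: goodq_def)
  define c1 where "c1 = ch l1 a b"
  define c2 where "c2 = ch l2 b e"
  have cd1: "chq (step W k) = c1" using sq1 l1_def by (simp add: chq_def c1_def)
  have cd2: "chq (step W (Suc k)) = c2" using sq2 l2_def by (simp add: chq_def c2_def)
  note P1 = ch_props[OF ab nab, folded c1_def]
  note P2 = ch_props[OF be nbe, folded c2_def]
  note C1 = ch[OF ab, folded c1_def]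
  note C2 = ch[OF be, folded c2_def]
  define n1 where "n1 = length c1"
  have n1: "2 \<le> n1" using P1(1) n1_def by simp
  define p where "p = c1 ! (n1 - 2)"
  define q where "q = c2 ! 1"
  have c1ne: "c1 \<noteq> []" using n1 n1_def by auto
  have c2ne: "c2 \<noteq> []" using P2(1) by auto
  have lastc1: "c1 ! (n1 - 1) = b" using C1(3) c1ne n1_def by (simp add: last_conv_nth)
  have hdc2: "c2 ! 0 = b" using C2(2) c2ne by (simp add: hd_conv_nth)
  have "last (stp c1) = stp c1 ! (n1 - 2)"
  proof -
    have ls: "length (stp c1) = n1 - 1" using n1_def by simp
    have "stp c1 \<noteq> []"
    proof
      assume "stp c1 = []"
      then have "length (stp c1) = 0" by simp
      then show False using ls n1 by linarith
    qed
    then show ?thesis using ls by (simp add: last_conv_nth numeral_2_eq_2)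
  qed
  also have "\<dots> = (p, b)" using n1 n1_def lastc1
    by (simp add: nth_stp step_def p_def Suc_diff_Suc numeral_2_eq_2)
  finally have pb: "(p, b) \<in> A" using h cd1 by simp
  have "hd (stp c2) = stp c2 ! 0" using stp_ne[OF P2(1)] by (simp add: hd_conv_nth)
  also have "\<dots> = (b, q)" using P2(1) hdc2 by (simp add: nth_stp step_def q_def)
  finally have bq: "(b, q) \<in> A" using h cd2 by simp
  have ap: "(a, p) \<in> RR l1" using P1(6)[of "n1 - 2"] n1 n1_def p_def by simp
  have nap: "(a, p) \<notin> A"
  proof
    assume "(a, p) \<in> A" then have "(a, b) \<in> A" using pb transE[OF eA] by blast
    then show False using nab by simp
  qed
  have pe: "(p, e) \<in> RR l2" using trans_RR[OF _ be, of p] pb A_RR by blast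
  have npe: "(p, e) \<notin> A"
  proof
    assume "(p, e) \<in> A" then have "(b, e) \<in> A" using symE[OF eA pb] transE[OF eA] by blast
    then show False using nbe by simp
  qed
  have labap: "lab (a, p) = l1" by (rule lab_eq[OF ap nap])
  have labpe: "lab (p, e) = l2" by (rule lab_eq[OF pe npe])
  have d1: "dd l1 a p < dd l1 a b"
  proof -
    let ?c = "take (n1 - 1) c1"
    have ne: "?c \<noteq> []" using n1 c1ne by simp
    have "dd l1 (hd ?c) (last ?c) \<le> length ?c - 1" by (rule dd_le[OF ne pth_take[OF C1(4)]])
    moreover have "hd ?c = a" using C1(2) n1 by simp
    moreover have "last ?c = p" using last_take_Suc[of "n1 - 2" c1] n1 n1_def p_def
      by (simp add: Suc_diff_Suc numeral_2_eq_2)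
    moreover have "length ?c = n1 - 1" using n1_def by simp
    ultimately show ?thesis using C1(1) n1_def n1 by simp
  qed
  have d2: "dd l2 p e \<le> dd l2 b e"
  proof -
    let ?c = "p # tl c2"
    have tne: "tl c2 \<noteq> []" using P2(1) by (cases c2) auto
    have pq: "(p, q) \<in> A" using pb bq transE[OF eA] by blast
    have pth: "pth (S l2) ?c"
      unfolding pth_def
    proof (intro allI impI)
      fix m assume m: "m < length ?c - 1"
      show "step ?c m \<in> S l2"
      proof (cases m)
        case 0
        then have "step ?c m = (p, q)" using tne by (cases c2) (simp_all add: step_def q_def)
        then show ?thesis using pq by (simp add: S_def)
      next
        case (Suc m')
        then have "step ?c m = step c2 m" using m by (cases c2) (simp_all add: step_def)
        then show ?thesis using C2(4) m by (auto simp: pth_def)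
      qed
    qed
    have "dd l2 (hd ?c) (last ?c) \<le> length ?c - 1" by (rule dd_le[OF _ pth]) simp
    moreover have "last ?c = e" using tne C2(3) by (simp add: last_tl)
    moreover have "length ?c = length c2" using c2ne by (cases c2) auto
    ultimately show ?thesis using C2(1) by simp
  qed
  define W' where "W' = W[Suc k := p]"
  have lenW': "length W' = length W" by (simp add: W'_def)
  have stW': "step W' m = (if m = k then (a, p) else if m = Suc k then (p, e) else step W m)"
    if "m < length W - 1" for m
    using that k by (auto simp: W'_def step_def nth_list_update a_def e_def)
  have goodW': "goodq (step W' m) \<and> lab (step W' m) = lab (step W m)" if "m < length W - 1" for m
  proof -
    have "m = k \<or> m = Suc k \<or> (m \<noteq> k \<and> m \<noteq> Suc k)" by auto
    then show ?thesis
    proof (elim disjE)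
      assume "m = k"
      then show ?thesis using stW'[OF that] ap nap labap l1_def by (cases l1) (auto simp: goodq_def)
    next
      assume "m = Suc k"
      then show ?thesis using stW'[OF that] pe npe labpe l2_def by (cases l2) (auto simp: goodq_def)
    next
      assume "m \<noteq> k \<and> m \<noteq> Suc k"
      then show ?thesis using stW'[OF that] wf(5)[OF that] by auto
    qed
  qed
  have "altW x W'"
    unfolding altW_def lenW'
  proof (intro conjI allI impI)
    show "3 \<le> length W" by (rule wf(4))
    have ne: "W' \<noteq> []" using wf(1) by (simp add: W'_def)
    have "W' ! 0 = W ! 0" by (simp add: W'_def)
    then show "hd W' = x" using ne wf(2) by (simp add: hd_conv_nth)
    have "W' ! (length W - 1) = W ! (length W - 1)" using k by (simp add: W'_def)
    then show "last W' = x" using ne wf(3) lenW' by (simp add: last_conv_nth)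
    show "goodq (step W' m)" if "m < length W - 1" for m using goodW'[OF that] by simp
    show "lab (step W' m) \<noteq> lab (step W' (Suc m))" if "Suc m < length W - 1" for m
      using goodW'[of m] goodW'[of "Suc m"] wf(6)[OF that] that by auto
  qed
  then have le: "cost W \<le> cost W'" using mc lenW' by blast
  have "cost W' < cost W"
    unfolding cost_def lenW'
  proof (rule sum_strict_mono_ex1)
    show "finite {..<length W - 1}" by simp
    show "\<forall>m\<in>{..<length W - 1}. D (step W' m) \<le> D (step W m)"
    proof
      fix m assume m: "m \<in> {..<length W - 1}"
      then have m': "m < length W - 1" by simp
      have "m = k \<or> m = Suc k \<or> (m \<noteq> k \<and> m \<noteq> Suc k)" by auto
      then show "D (step W' m) \<le> D (step W m)"
      proof (elim disjE)
        assume "m = k"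
        then show ?thesis using stW'[OF m'] d1 labap sq1 l1_def by (simp add: D_def)
      next
        assume "m = Suc k"
        then show ?thesis using stW'[OF m'] d2 labpe sq2 l2_def by (simp add: D_def)
      next
        assume "m \<noteq> k \<and> m \<noteq> Suc k"
        then show ?thesis using stW'[OF m'] by simp
      qed
    qed
    show "\<exists>m\<in>{..<length W - 1}. D (step W' m) < D (step W m)"
      using stW'[of k] k d1 labap sq1 l1_def by (intro bexI[of _ k]) (auto simp: D_def)
  qed
  then show False using le by simp
qed


subsection \<open>Triangle-join bookkeeping\<close>

abbreviation "Ea \<equiv> (A \<union> B)\<^sup>*"
abbreviation "Eb \<equiv> (A \<union> C)\<^sup>*"
abbreviation "Ec \<equiv> (B \<union> C)\<^sup>*"

lemma tri_Ri_simps: "tri_Ri Ea Eb Ec 1 = Ea" "tri_Ri Ea Eb Ec 2 = Eb" "tri_Ri Ea Eb Ec 3 = Ec"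
  using i12 i13 i23 by (simp_all add: tri_Ri_def eqjoin_def)

lemma tri_R0_simp: "tri_R0 Ea Eb Ec = R0"
proof -
  have "A \<inter> Ec \<subseteq> R0" by (rule A_R3)
  moreover have "R0 \<subseteq> Ea \<inter> Eb \<inter> Ec" by auto
  moreover have "Ea \<inter> Eb \<inter> Ec = A \<inter> Ec" using i12 by simp
  ultimately show ?thesis unfolding tri_R0_def by blast
qed

lemma pieces:
  "tri_piece Ea Eb Ec TE1 = {}" "tri_piece Ea Eb Ec TE2 = {}" "tri_piece Ea Eb Ec TE3 = {}"
  "tri_piece Ea Eb Ec TR12 = A - R0" "tri_piece Ea Eb Ec TR13 = B - R0" "tri_piece Ea Eb Ec TR23 = C - R0"
  by (simp_all only: tri_piece.simps tri_Ri_simps tri_R0_simp i12 i13 i23) auto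

lemma nbrs:
  "tri_nbr Ea Eb Ec TR12 = (B - R0) \<union> (C - R0)"
  "tri_nbr Ea Eb Ec TR13 = (A - R0) \<union> (C - R0)"
  "tri_nbr Ea Eb Ec TR23 = (A - R0) \<union> (B - R0)"
  by (simp_all only: tri_nbr.simps pieces) auto

definition dt :: "'a \<times> 'a \<Rightarrow> 'a \<times> 'a \<Rightarrow> bool" where
  "dt r s \<longleftrightarrow> \<not> (r \<in> A \<and> s \<in> A) \<and> \<not> (r \<in> B \<and> s \<in> B) \<and> \<not> (r \<in> C \<and> s \<in> C)"

abbreviation "PC \<equiv> (A - R0) \<union> (B - R0) \<union> (C - R0)"

lemma SX: "S l - R0 \<subseteq> PC" by (cases l) (auto simp: S_def X_def)

lemma BC_X: "(r \<in> B \<and> s \<in> B) \<or> (r \<in> C \<and> s \<in> C) \<Longrightarrow> (r \<in> X l \<and> s \<in> X l) \<or> (r \<in> X (\<not> l) \<and> s \<in> X (\<not> l))"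
  by (cases l) (auto simp: X_def)

lemma chain_facts:
  assumes g: "goodq q"
  shows "\<forall>r\<in>set (stp (chq q)). r \<in> S (lab q) - R0"
    "successively dt (stp (chq q))"
    "\<exists>r\<in>set (stp (chq q)). r \<in> X (lab q)"
    "stp (chq q) \<noteq> []"
proof -
  have q: "(fst q, snd q) \<in> RR (lab q)" "(fst q, snd q) \<notin> A" using g goodq_RR[OF g]
    by (auto simp: goodq_def)
  note P = ch_props[OF q, folded chq_def]
  show s1: "\<forall>r\<in>set (stp (chq q)). r \<in> S (lab q) - R0"
    using P(8) by (auto simp: set_stp)
  show "successively dt (stp (chq q))"
    unfolding successively_conv_nth
  proof (intro allI impI)
    fix i assume i: "Suc i < length (stp (chq q))"
    have e: "stp (chq q) ! i = step (chq q) i" "stp (chq q) ! Suc i = step (chq q) (Suc i)"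
      using i by (simp_all add: nth_stp)
    have i': "Suc i < length (chq q) - 1" using i by simp
    have in1: "step (chq q) i \<in> S (lab q) - R0" "step (chq q) (Suc i) \<in> S (lab q) - R0"
      using P(8)[of i] P(8)[of "Suc i"] i' by auto
    have n1: "step (chq q) i \<notin> X (\<not> lab q)" "step (chq q) (Suc i) \<notin> X (\<not> lab q)"
      using S_notother in1 by auto
    show "dt (stp (chq q) ! i) (stp (chq q) ! Suc i)"
      unfolding e dt_def using P(2)[OF i'] P(3)[OF i'] n1 BC_X[of "step (chq q) i" "step (chq q) (Suc i)" "lab q"]
      by blast
  qed
  show "\<exists>r\<in>set (stp (chq q)). r \<in> X (lab q)" using P(9) by (meson set_stp)
  show "stp (chq q) \<noteq> []" using stp_ne[OF P(1)] .
qed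

lemma V_contra:
  assumes aw0: "altW x W0"
    and hA: "\<forall>xs. tri_reduced Ea Eb Ec xs \<and> proper_II Ea Eb Ec xs \<and> hd xs = x \<and> last xs = x
               \<longrightarrow> concat_Ri_loops Ea Eb Ec xs"
    and hB: "\<forall>xs. reduced B C R0 xs \<and> hd xs = x \<longrightarrow> last xs \<noteq> x"
  shows False
proof -
  obtain W where aw: "altW x W" and ml: "\<forall>W'. altW x W' \<longrightarrow> length W \<le> length W'"
    and mc: "\<forall>W'. altW x W' \<longrightarrow> length W' = length W \<longrightarrow> cost W \<le> cost W'"
    using min_W[OF aw0] by blast
  note wf = altW_facts[OF aw]
  have gW: "\<forall>q\<in>set (stp W). goodq q" using wf(5) by (auto simp: set_stp)
  define V where "V = ex W"
  have Vb: "V \<noteq> [] \<and> hd V = x \<and> last V = x \<and> length W \<le> length V"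
    using ex_basic[OF wf(1) gW] aw by (simp add: V_def altW_def)
  have lenV: "3 \<le> length V" using Vb wf(4) by linarith
  have Vstp: "stp V = concat (map (\<lambda>q. stp (chq q)) (stp W))"
    using ex_stp[OF wf(1) gW] by (simp add: V_def)
  have "x \<notin> inr W" using F1[OF aw ml] inr_nthD by metis
  moreover have "\<forall>q\<in>set (stp W). x \<notin> inr (chq q)" using F2[OF aw ml] by (auto simp: set_stp)
  ultimately have Vinr: "x \<notin> inr V" using ex_inr[OF wf(1) gW] by (simp add: V_def)
  have V2: "\<forall>r\<in>set (stp V). r \<in> PC"
    using Vstp chain_facts(1) gW SX by fastforce
  have V3: "successively dt (stp V)"
    unfolding Vstp
  proof (rule successively_concat)
    show "\<forall>xs\<in>set (map (\<lambda>q. stp (chq q)) (stp W)). xs \<noteq> [] \<and> successively dt xs"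
      using chain_facts(2,4) gW by auto
    have jn: "\<forall>i. Suc i < length (stp W) \<longrightarrow> dt (last (stp (chq (stp W ! i)))) (hd (stp (chq (stp W ! Suc i))))"
    proof (intro allI impI)
      fix i assume i: "Suc i < length (stp W)"
      then have i': "Suc i < length W - 1" by simp
      define q1 where "q1 = step W i"
      define q2 where "q2 = step W (Suc i)"
      have e: "stp W ! i = q1" "stp W ! Suc i = q2" using i by (simp_all add: nth_stp q1_def q2_def)
      have g1: "goodq q1" "goodq q2" using wf(5) i' by (auto simp: q1_def q2_def)
      have l12: "lab q1 \<noteq> lab q2" using wf(6)[OF i'] by (simp add: q1_def q2_def)
      define r where "r = last (stp (chq q1))"
      define s where "s = hd (stp (chq q2))"
      have r: "r \<in> S (lab q1) - R0" using chain_facts(1,4)[OF g1(1)] by (simp add: r_def)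
      have s: "s \<in> S (lab q2) - R0" using chain_facts(1,4)[OF g1(2)] by (simp add: s_def)
      have nAA: "\<not> (r \<in> A \<and> s \<in> A)" using F3[OF aw mc i'] by (simp add: r_def s_def q1_def q2_def)
      have "r \<notin> X (\<not> lab q1)" "s \<notin> X (\<not> lab q2)" using S_notother r s by auto
      then have "\<not> (r \<in> X l \<and> s \<in> X l)" for l using l12 by (cases "lab q1"; cases "lab q2"; cases l) auto
      then have "dt r s" unfolding dt_def using nAA BC_X[of r s True] by auto
      then show "dt (last (stp (chq (stp W ! i)))) (hd (stp (chq (stp W ! Suc i))))"
        by (simp add: e r_def s_def)
    qed
    then show "successively (\<lambda>xs ys. dt (last xs) (hd ys)) (map (\<lambda>q. stp (chq q)) (stp W))"
      unfolding successively_map successively_conv_nth by simp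
  qed
  have V4: "\<exists>r\<in>set (stp V). r \<in> X l" for l
  proof -
    have i: "Suc 0 < length W - 1" using wf(4) by linarith
    have "lab (step W 0) \<noteq> lab (step W 1)" using wf(6)[OF i] by simp
    then have "lab (step W 0) = l \<or> lab (step W 1) = l" by (cases l; cases "lab (step W 0)") auto
    then obtain j where j0: "j = 0 \<or> j = 1" "lab (step W j) = l" by blast
    then have j: "j < length W - 1" "lab (step W j) = l" using i by auto
    have g: "goodq (step W j)" using wf(5)[OF j(1)] .
    have "step W j \<in> set (stp W)" using j(1) by (auto simp: set_stp)
    then show ?thesis using chain_facts(3)[OF g] j(2) Vstp by auto
  qed
  have sV: "step V k \<in> set (stp V)" if "k < length V - 1" for k using that by (auto simp: set_stp)
  have dtV: "dt (step V k) (step V (Suc k))" if "Suc k < length V - 1" for k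
    using V3 that by (auto simp: successively_conv_nth nth_stp)
  have V0: "V ! 0 = x" using Vb by (metis hd_conv_nth)
  show False
  proof (cases "\<exists>r\<in>set (stp V). r \<in> A")
    case True
    define ty where "ty r = (if r \<in> A then TR12 else if r \<in> B then TR13 else TR23)" for r
    have tyP: "r \<in> tri_piece Ea Eb Ec (ty r)" if "r \<in> PC" for r
      using that by (auto simp del: tri_piece.simps simp: ty_def pieces)
    have tyn: "s \<in> tri_nbr Ea Eb Ec (ty r)" if "r \<in> PC" "s \<in> PC" "dt r s \<or> dt s r" for r s
      using that by (auto simp del: tri_piece.simps tri_nbr.simps simp: ty_def nbrs dt_def)
    have tr: "tri_reduced Ea Eb Ec V"
      unfolding tri_reduced_def
    proof (intro conjI allI impI)
      show "V \<noteq> []" using Vb by simp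
      fix k assume k: "k < length V - 1"
      have rk: "step V k \<in> PC" using V2 sV[OF k] by blast
      show "\<exists>t. step V k \<in> tri_piece Ea Eb Ec t \<and>
            (0 < k \<longrightarrow> step V (k - 1) \<in> tri_nbr Ea Eb Ec t) \<and>
            (Suc k < length V - 1 \<longrightarrow> step V (Suc k) \<in> tri_nbr Ea Eb Ec t)"
      proof (intro exI[of _ "ty (step V k)"] conjI impI)
        show "step V k \<in> tri_piece Ea Eb Ec (ty (step V k))" by (rule tyP[OF rk])
        show "step V (k - 1) \<in> tri_nbr Ea Eb Ec (ty (step V k))" if "0 < k"
        proof -
          have "Suc (k - 1) < length V - 1" using that k by simp
          then have "dt (step V (k - 1)) (step V k)" using dtV[of "k - 1"] that by simp
          moreover have "step V (k - 1) \<in> PC" using V2 sV[of "k - 1"] k by auto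
          ultimately show ?thesis using tyn[OF rk] by blast
        qed
        show "step V (Suc k) \<in> tri_nbr Ea Eb Ec (ty (step V k))" if "Suc k < length V - 1"
        proof -
          have "dt (step V k) (step V (Suc k))" using dtV[OF that] .
          moreover have "step V (Suc k) \<in> PC" using V2 sV[OF that] by auto
          ultimately show ?thesis using tyn[OF rk] by blast
        qed
      qed
    qed
    have pII: "proper_II Ea Eb Ec V"
    proof -
      have "TR12 \<in> tri_types Ea Eb Ec V"
      proof -
        obtain k where k: "k < length V - 1" "step V k \<in> A" using True by (auto simp: set_stp)
        then have "step V k \<notin> R0" using V2 sV[OF k(1)] by auto
        then show ?thesis using k unfolding tri_types_def by (auto simp del: tri_piece.simps simp: pieces)
      qed
      moreover have "TR13 \<in> tri_types Ea Eb Ec V"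
      proof -
        obtain k where k: "k < length V - 1" "step V k \<in> B" using V4[of True] by (auto simp: set_stp X_def)
        then have "step V k \<notin> R0" using V2 sV[OF k(1)] by auto
        then show ?thesis using k unfolding tri_types_def by (auto simp del: tri_piece.simps simp: pieces)
      qed
      moreover have "TR23 \<in> tri_types Ea Eb Ec V"
      proof -
        obtain k where k: "k < length V - 1" "step V k \<in> C" using V4[of False] by (auto simp: set_stp X_def)
        then have "step V k \<notin> R0" using V2 sV[OF k(1)] by auto
        then show ?thesis using k unfolding tri_types_def by (auto simp del: tri_piece.simps simp: pieces)
      qed
      moreover have "TE1 \<notin> tri_types Ea Eb Ec V" "TE2 \<notin> tri_types Ea Eb Ec V" "TE3 \<notin> tri_types Ea Eb Ec V"
        by (auto simp del: tri_piece.simps simp: tri_types_def pieces)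
      ultimately show ?thesis by (simp add: proper_II_def)
    qed
    have "concat_Ri_loops Ea Eb Ec V" using hA tr pII Vb by blast
    then obtain js where js: "length js \<ge> 2" "hd js = 0" "last js = length V - 1" "sorted_wrt (<) js"
      "\<forall>t < length js - 1. V ! (js ! t) = V ! (js ! Suc t) \<and>
           (\<exists>i\<in>{1,2,3::nat}. \<forall>k. js ! t \<le> k \<and> k < js ! Suc t \<longrightarrow> step V k \<in> tri_Ri Ea Eb Ec i)"
      unfolding concat_Ri_loops_def by blast
    have jne: "js \<noteq> []" using js(1) by auto
    have j0: "js ! 0 = 0" using js(2) jne by (simp add: hd_conv_nth)
    have j1pos: "0 < js ! 1" using sorted_wrt_nth_less[OF js(4), of 0 1] js(1) j0 by simp
    have j1le: "js ! 1 \<le> length V - 1"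
    proof (cases "length js = 2")
      case True
      then show ?thesis using js(3) jne by (simp add: last_conv_nth)
    next
      case False
      then have "js ! 1 < js ! (length js - 1)" using sorted_wrt_nth_less[OF js(4), of 1 "length js - 1"] js(1)
        by simp
      then show ?thesis using js(3) jne by (simp add: last_conv_nth)
    qed
    have t0: "V ! (js ! 0) = V ! (js ! Suc 0) \<and>
           (\<exists>i\<in>{1,2,3::nat}. \<forall>k. js ! 0 \<le> k \<and> k < js ! Suc 0 \<longrightarrow> step V k \<in> tri_Ri Ea Eb Ec i)"
      using js(5) js(1) by auto
    have j1eq: "js ! 1 = length V - 1"
    proof (rule ccontr)
      assume "js ! 1 \<noteq> length V - 1"
      then have "js ! 1 < length V - 1" using j1le by simp
      then have "V ! (js ! 1) \<in> inr V" using inr_nth j1pos by blast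
      moreover have "V ! (js ! 1) = x" using t0 j0 V0 by simp
      ultimately show False using Vinr by simp
    qed
    then obtain i where i: "i \<in> {1,2,3::nat}" "\<forall>k < length V - 1. step V k \<in> tri_Ri Ea Eb Ec i"
      using t0 j0 by auto
    have allin: "\<And>k. k < length V - 1 \<Longrightarrow> step V k \<in> tri_Ri Ea Eb Ec i" using i(2) by blast
    obtain kA where kA: "kA < length V - 1" "step V kA \<in> A" using True by (auto simp: set_stp)
    obtain kB where kB: "kB < length V - 1" "step V kB \<in> B" using V4[of True] by (auto simp: set_stp X_def)
    obtain kC where kC: "kC < length V - 1" "step V kC \<in> C" using V4[of False] by (auto simp: set_stp X_def)
    have nR0: "step V k \<notin> R0" if "k < length V - 1" for k using V2 sV[OF that] by auto
    consider "i = 1" | "i = 2" | "i = 3" using i(1) by auto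
    then show False
    proof cases
      case 1
      have "step V kC \<in> tri_Ri Ea Eb Ec i" using allin[OF kC(1)] .
      then have "step V kC \<in> Ea" unfolding \<open>i = 1\<close> tri_Ri_simps .
      then have "step V kC \<in> C \<inter> RR True" using kC(2) by (simp add: RR_T)
      then show False using X_other[of False] nR0[OF kC(1)] by (auto simp: X_def)
    next
      case 2
      have "step V kB \<in> tri_Ri Ea Eb Ec i" using allin[OF kB(1)] .
      then have "step V kB \<in> Eb" unfolding \<open>i = 2\<close> tri_Ri_simps .
      then have "step V kB \<in> B \<inter> RR False" using kB(2) by (simp add: RR_F)
      then show False using X_other[of True] nR0[OF kB(1)] by (auto simp: X_def)
    next
      case 3
      have "step V kA \<in> tri_Ri Ea Eb Ec i" using allin[OF kA(1)] .
      then have "step V kA \<in> Ec" unfolding \<open>i = 3\<close> tri_Ri_simps .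
      then have "step V kA \<in> A \<inter> Ec" using kA(2) by simp
      then show False using A_R3 nR0[OF kA(1)] by blast
    qed
  next
    case False
    have "reduced B C R0 V"
      unfolding reduced_def
    proof (intro conjI impI)
      show "2 \<le> length V" using lenV by simp
      show "\<exists>lab :: nat \<Rightarrow> bool. (\<forall>k < length V - 1. step V k \<in> (if lab k then B else C)) \<and>
        (\<forall>k. Suc k < length V - 1 \<longrightarrow> lab k \<noteq> lab (Suc k))"
      proof (intro exI[of _ "\<lambda>k. step V k \<in> B"] conjI allI impI)
        fix k assume k: "k < length V - 1"
        show "step V k \<in> (if step V k \<in> B then B else C)"
          using V2 sV[OF k] False by auto
      next
        fix k assume k: "Suc k < length V - 1"
        have "step V k \<in> PC" "step V (Suc k) \<in> PC" using V2 sV[of k] sV[OF k] k by auto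
        then show "(step V k \<in> B) \<noteq> (step V (Suc k) \<in> B)"
          using dtV[OF k] False sV[of k] sV[OF k] k by (auto simp: dt_def)
      qed
      show "\<forall>k < length V - 1. step V k \<notin> R0" using V2 sV by auto
      show "V ! 0 \<noteq> V ! 1" if "length V = 2" using that lenV by simp
    qed
    then show False using hB Vb by blast
  qed
qed


lemma red_altW:
  assumes r: "reduced Ea Eb A xs" and h: "hd xs = x" "last xs = x"
  shows "altW x xs"
proof -
  have l2: "2 \<le> length xs" using r unfolding reduced_def by blast
  then have ne: "xs \<noteq> []" by auto
  have c2: "length xs = 2 \<longrightarrow> xs ! 0 \<noteq> xs ! 1" using r unfolding reduced_def by blast
  have len: "2 < length xs"
  proof (rule ccontr)
    assume "\<not> 2 < length xs"
    then have e2: "length xs = 2" using l2 by linarith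
    have "xs ! 0 = x" using h(1) ne by (simp add: hd_conv_nth)
    moreover have "xs ! 1 = x" using h(2) ne e2 by (simp add: last_conv_nth)
    ultimately show False using c2 e2 by simp
  qed
  obtain lb :: "nat \<Rightarrow> bool" where lb: "\<forall>k < length xs - 1. step xs k \<in> (if lb k then Ea else Eb)"
    "\<forall>k. Suc k < length xs - 1 \<longrightarrow> lb k \<noteq> lb (Suc k)"
    using r unfolding reduced_def by blast
  have "2 < length xs \<longrightarrow> (\<forall>k < length xs - 1. step xs k \<notin> A)" using r unfolding reduced_def by blast
  then have nA: "\<forall>k < length xs - 1. step xs k \<notin> A" using len by blast
  have inRR: "step xs k \<in> RR (lb k)" if "k < length xs - 1" for k
  proof -
    have "step xs k \<in> (if lb k then Ea else Eb)" using lb(1) that by blast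
    then show ?thesis by (cases "lb k") (simp_all add: RR_T RR_F)
  qed
  have lk: "lab (step xs k) = lb k" if "k < length xs - 1" for k
    using lab_eq[OF inRR[OF that]] nA that by blast
  show ?thesis
    unfolding altW_def
  proof (intro conjI allI impI)
    show "3 \<le> length xs" using len by simp
    show "hd xs = x" "last xs = x" using h by simp_all
    show "goodq (step xs k)" if "k < length xs - 1" for k
    proof -
      have "step xs k \<in> RR True \<union> RR False" using inRR[OF that] by (cases "lb k") simp_all
      then show ?thesis using nA that unfolding goodq_def by blast
    qed
    show "lab (step xs k) \<noteq> lab (step xs (Suc k))" if "Suc k < length xs - 1" for k
    proof -
      have "lb k \<noteq> lb (Suc k)" using lb(2) that by blast
      moreover have "k < length xs - 1" using that by simp
      ultimately show ?thesis using lk[of k] lk[of "Suc k"] that by simp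
    qed
  qed
qed

lemma red_BC:
  assumes r: "reduced B C R0 xs" and h: "hd xs = last xs"
  shows "reduced Ea Eb A xs"
proof -
  have l2: "2 \<le> length xs" using r unfolding reduced_def by blast
  then have ne: "xs \<noteq> []" by auto
  have c2: "length xs = 2 \<longrightarrow> xs ! 0 \<noteq> xs ! 1" using r unfolding reduced_def by blast
  have len: "2 < length xs"
  proof (rule ccontr)
    assume "\<not> 2 < length xs"
    then have e2: "length xs = 2" using l2 by linarith
    have "xs ! 0 = hd xs" using ne by (simp add: hd_conv_nth)
    moreover have "xs ! 1 = last xs" using ne e2 by (simp add: last_conv_nth)
    ultimately show False using c2 e2 h by simp
  qed
  obtain lb :: "nat \<Rightarrow> bool" where lb: "\<forall>k < length xs - 1. step xs k \<in> (if lb k then B else C)"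
    "\<forall>k. Suc k < length xs - 1 \<longrightarrow> lb k \<noteq> lb (Suc k)"
    using r unfolding reduced_def by blast
  have "2 < length xs \<longrightarrow> (\<forall>k < length xs - 1. step xs k \<notin> R0)" using r unfolding reduced_def by blast
  then have n0: "\<forall>k < length xs - 1. step xs k \<notin> R0" using len by blast
  have lb': "\<forall>k < length xs - 1. step xs k \<in> (if lb k then Ea else Eb)"
  proof (intro allI impI)
    fix k assume k: "k < length xs - 1"
    have "step xs k \<in> (if lb k then B else C)" using lb(1) k by blast
    then show "step xs k \<in> (if lb k then Ea else Eb)" by (cases "lb k") auto
  qed
  have nA: "\<forall>k < length xs - 1. step xs k \<notin> A"
  proof (intro allI impI)
    fix k assume k: "k < length xs - 1"
    have "step xs k \<in> (if lb k then B else C)" using lb(1) k by blast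
    moreover have "step xs k \<notin> R0" using n0 k by blast
    ultimately show "step xs k \<notin> A" using AB AC by (cases "lb k") auto
  qed
  show ?thesis
    unfolding reduced_def
  proof (intro conjI impI)
    show "2 \<le> length xs" by (rule l2)
    show "\<exists>lab :: nat \<Rightarrow> bool. (\<forall>k < length xs - 1. step xs k \<in> (if lab k then Ea else Eb)) \<and>
        (\<forall>k. Suc k < length xs - 1 \<longrightarrow> lab k \<noteq> lab (Suc k))"
      using lb(2) lb' by blast
    show "\<forall>k < length xs - 1. step xs k \<notin> A" by (rule nA)
    show "xs ! 0 \<noteq> xs ! 1" if "length xs = 2" using that len by simp
  qed
qed

end

theorem theorem4p4:
  fixes M :: "('a::polish_space) measure"
    and R12 R13 R23 R1 R2 R3 R0 R :: "('a \<times> 'a) set"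
  assumes "std_nonatomic_prob M"
    and "SP1 M R12" and "SP1 M R13" and "SP1 M R23"
    and "R1 = eqjoin R12 R13" and "R2 = eqjoin R12 R23" and "R3 = eqjoin R13 R23"
    and "R1 \<inter> R2 = R12" and "R1 \<inter> R3 = R13" and "R2 \<inter> R3 = R23"
    and "R0 = R12 \<inter> R13 \<inter> R23"
    and "R = join3 R1 R2 R3"
    and "minimal_triangle_join M R1 R2 R3"
  shows "R = eqjoin R1 R2 \<and> (is_free_join M R R1 R2 R12 \<longleftrightarrow> is_free_join M R3 R13 R23 R0)"
proof -
  have eq: "equiv UNIV R12" "equiv UNIV R13" "equiv UNIV R23" using assms(2-4) by (auto simp: SP1_def)
  have R1d: "R1 = (R12 \<union> R13)\<^sup>*" "R2 = (R12 \<union> R23)\<^sup>*" "R3 = (R13 \<union> R23)\<^sup>*"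
    using assms(5-7) by (auto simp: eqjoin_def)
  interpret tri R12 R13 R23
    by unfold_locales (use eq assms(8-10) R1d in auto)
  have part1: "R = eqjoin R1 R2"
  proof -
    have "R13 \<union> R23 \<subseteq> (R1 \<union> R2)\<^sup>*" unfolding R1d(1,2) by auto
    then have "R3 \<subseteq> (R1 \<union> R2)\<^sup>*" unfolding R1d(3) by (rule rtrancl_subset_rtrancl)
    then have "R1 \<union> R2 \<union> R3 \<subseteq> (R1 \<union> R2)\<^sup>*" by auto
    then have "(R1 \<union> R2 \<union> R3)\<^sup>* \<subseteq> (R1 \<union> R2)\<^sup>*" by (rule rtrancl_subset_rtrancl)
    moreover have "(R1 \<union> R2)\<^sup>* \<subseteq> (R1 \<union> R2 \<union> R3)\<^sup>*" by (rule rtrancl_mono) auto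
    ultimately show ?thesis using assms(12) by (auto simp: join3_def eqjoin_def)
  qed
  have fwd: "free_amalg M R13 R23 R0" if fa: "free_amalg M R1 R2 R12"
    using fa unfolding free_amalg_def
  proof eventually_elim
    case (elim x)
    show ?case
    proof (intro allI impI)
      fix xs assume h: "reduced R13 R23 R0 xs \<and> hd xs = x"
      show "last xs \<noteq> x"
      proof
        assume l: "last xs = x"
        have "reduced ((R12 \<union> R13)\<^sup>*) ((R12 \<union> R23)\<^sup>*) R12 xs"
          using red_BC[of xs] h l assms(11) by auto
        then have "reduced R1 R2 R12 xs" unfolding R1d .
        then show False using elim h l by auto
      qed
    qed
  qed
  have tj: "AE x in M. \<forall>xs. tri_reduced R1 R2 R3 xs \<and> proper_II R1 R2 R3 xs \<and> hd xs = x \<and> last xs = x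
                  \<longrightarrow> concat_Ri_loops R1 R2 R3 xs"
    using assms(13) unfolding minimal_triangle_join_def triangle_join_def by blast
  have bwd: "free_amalg M R1 R2 R12" if fb: "free_amalg M R13 R23 R0"
    using fb tj unfolding free_amalg_def
  proof eventually_elim
    case (elim x)
    show ?case
    proof (intro allI impI)
      fix xs assume h: "reduced R1 R2 R12 xs \<and> hd xs = x"
      show "last xs \<noteq> x"
      proof
        assume l: "last xs = x"
        have "reduced ((R12 \<union> R13)\<^sup>*) ((R12 \<union> R23)\<^sup>*) R12 xs" using h unfolding R1d by simp
        then have aw: "altW x xs" using red_altW[of xs x] h l by auto
        have hA: "\<forall>xs. tri_reduced ((R12 \<union> R13)\<^sup>*) ((R12 \<union> R23)\<^sup>*) ((R13 \<union> R23)\<^sup>*) xs \<and>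
              proper_II ((R12 \<union> R13)\<^sup>*) ((R12 \<union> R23)\<^sup>*) ((R13 \<union> R23)\<^sup>*) xs \<and> hd xs = x \<and> last xs = x
               \<longrightarrow> concat_Ri_loops ((R12 \<union> R13)\<^sup>*) ((R12 \<union> R23)\<^sup>*) ((R13 \<union> R23)\<^sup>*) xs"
          using elim(2) unfolding R1d .
        have hB: "\<forall>xs. reduced R13 R23 (R12 \<inter> R13 \<inter> R23) xs \<and> hd xs = x \<longrightarrow> last xs \<noteq> x"
          using elim(1) assms(11) by simp
        show False by (rule V_contra[OF aw hA hB])
      qed
    qed
  qed
  show ?thesis using part1 fwd bwd assms(7) by (auto simp: is_free_join_def)
qed

end
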